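(* $$\int_1^{+\infty}\frac{\{x\}^2}{x^2}\,\mathrm{d}x=\sum_{n=0}^{+\infty}\ell_n^2=\log(2\pi)-\gamma_0-1 .$$
   Context: $\{x\}=x-\lfloor x\rfloor$; $\gamma_0$ is the Euler–Mascheroni constant. With Stieltjes constants $\gamma_n=\lim_{N\to\infty}\left(\sum_{k=1}^N\frac{\log^n k}{k}-\frac{\log^{n+1}N}{n+1}\right)$, $\ell_0=\gamma_0-1$ and $\ell_n=\sum_{k=1}^n\binom{n-1}{k-1}\frac{(-1)^{n-k}}{k!}\gamma_k$ for $n\ge1$. *)

theory Defs
  imports "HOL-Analysis.Analysis"
begin

definition stieltjes :: "nat \<Rightarrow> real" where
  "stieltjes n = lim (\<lambda>N::nat. (\<Sum>k=1..N. ln (real k) ^ n / real k)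
                                  - ln (real N) ^ (Suc n) / real (Suc n))"

definition ell :: "nat \<Rightarrow> real" where
  "ell n = (if n = 0 then euler_mascheroni - 1
            else (\<Sum>k=1..n. real ((n - 1) choose (k - 1)) * (-1) ^ (n - k) / fact k * stieltjes k))"

end

theory Submission
  imports Defs "HOL-Real_Asymp.Real_Asymp"
begin


fun Qm :: "nat \<Rightarrow> nat \<Rightarrow> real \<Rightarrow> real" where
  "Qm b 0 x = -1 / (real b * x ^ b)"
| "Qm b (Suc j) x = - (ln x ^ Suc j) / (real b * x ^ b) + real (Suc j) / real b * Qm b j x"

lemma Qm_deriv:
  assumes "x > 0" "b > 0"
  shows "(Qm b j has_real_derivative ln x ^ j / x ^ (b+1)) (at x)"
proof (induction j)
  case 0
  show ?case using assms
    by (auto intro!: derivative_eq_intros simp: field_simps power_add)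
       (simp add: power_eq_if algebra_simps)
next
  case (Suc j)
  have "((\<lambda>x. - (ln x ^ Suc j) / (real b * x ^ b)) has_real_derivative
        (ln x ^ Suc j / x ^ (b+1) - real (Suc j) / real b * (ln x ^ j / x ^ (b+1)))) (at x)"
    using assms
    apply (auto intro!: derivative_eq_intros simp: field_simps power_add)
    apply (simp add: power_eq_if algebra_simps)
    done
  from DERIV_add[OF this DERIV_cmult[OF Suc.IH, of "real (Suc j) / real b"]]
  show ?case by (simp add: algebra_simps)
qed

lemma Qm_lim: "b > 0 \<Longrightarrow> ((Qm b j) \<longlongrightarrow> 0) at_top"
proof (induction j)
  case 0 then show ?case by simp real_asymp
next
  case (Suc j)
  have "((\<lambda>x. - (ln x ^ Suc j) / (real b * x ^ b)) \<longlongrightarrow> 0) at_top"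
    using Suc.prems by real_asymp
  from tendsto_add[OF this tendsto_mult_right_zero[OF Suc.IH[OF Suc.prems], of "real (Suc j) / real b"]]
  show ?case unfolding Qm.simps by simp
qed

lemma Qm_1: "b > 0 \<Longrightarrow> Qm b j 1 = - fact j / real b ^ (j+1)"
  by (induction j) (auto simp: field_simps)

lemma moment_gen:
  fixes j b :: nat assumes "b > 0"
  shows "((\<lambda>x::real. ln x ^ j / x ^ (b+1)) has_integral (fact j / real b ^ (j+1))) {1..}"
proof (rule has_integral_to_inf)
  show "(\<lambda>x::real. ln x ^ j / x ^ (b+1)) integrable_on {1..y}" for y
    by (rule integrable_continuous_interval, intro continuous_intros) auto
  have "((\<lambda>x::real. ln x ^ j / x ^ (b+1)) has_integral (Qm b j y - Qm b j 1)) {1..y}" if "y \<ge> 1" for y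
  proof (intro fundamental_theorem_of_calculus)
    show "1 \<le> y" by fact
    fix x assume "x \<in> {1..y}"
    then have "(Qm b j has_real_derivative ln x ^ j / x ^ (b+1)) (at x)"
      using assms by (intro Qm_deriv) auto
    then show "(Qm b j has_vector_derivative ln x ^ j / x ^ (b+1)) (at x within {1..y})"
      by (simp add: has_real_derivative_iff_has_vector_derivative[symmetric] has_field_derivative_at_within)
  qed
  then have "\<forall>\<^sub>F y in at_top. integral {1..y} (\<lambda>x. ln x ^ j / x ^ (b+1)) = Qm b j y - Qm b j 1"
    by (meson eventually_at_top_linorderI integral_unique)
  moreover have "((\<lambda>y. Qm b j y - Qm b j 1) \<longlongrightarrow> 0 - Qm b j 1) at_top"
    by (intro tendsto_intros Qm_lim assms)
  ultimately show "((\<lambda>y. integral {1..y} (\<lambda>x. ln x ^ j / x ^ (b+1))) \<longlongrightarrow> fact j / real b ^ (j+1)) at_top"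
    using Qm_1[OF assms] by (simp add: filterlim_cong)
qed (auto)



lemma alt_choose_choose:
  "(\<Sum>j\<le>n. real (n choose j) * (-1)^j * real (j choose i)) = (if i = n then (-1)^n else 0)"
proof (cases "i \<le> n")
  case False
  then show ?thesis by (auto intro!: sum.neutral simp: binomial_eq_0)
next
  case True
  have "(\<Sum>j\<le>n. real (n choose j) * (-1)^j * real (j choose i)) =
        (\<Sum>j\<in>{i..n}. real (n choose j) * (-1)^j * real (j choose i))"
    by (rule sum.mono_neutral_right) (auto simp: binomial_eq_0)
  also have "\<dots> = (\<Sum>j\<in>{i..n}. real (n choose i) * ((-1)^j * real ((n - i) choose (j - i))))"
    by (rule sum.cong) (auto simp: choose_mult[symmetric] simp flip: of_nat_mult)
  also have "\<dots> = real (n choose i) * (\<Sum>l\<in>{0..n-i}. (-1)^(l+i) * real ((n - i) choose l))"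
    unfolding sum_distrib_left[symmetric]
    using True
    by (subst sum.atLeastAtMost_shift_0[of i n]) (auto simp: add.commute)
  also have "\<dots> = real (n choose i) * (-1)^i * (\<Sum>l\<le>n-i. (-1)^l * real ((n - i) choose l))"
    by (simp add: power_add sum_distrib_left sum_distrib_right atLeast0AtMost mult_ac)
  also have "\<dots> = (if i = n then (-1)^n else 0)"
    using True choose_alternating_sum[of "n - i", where 'a=real] by auto
  finally show ?thesis .
qed

lemma fact_binom: "fact (j + k) / (fact j * fact k) = real ((j + k) choose j)"
  by (simp add: binomial_fact)

lemma binom_vdm: "real ((j + k) choose j) = (\<Sum>i\<le>n. real (j choose i) * real (k choose i))" if "j \<le> n"
proof -
  have "(j + k) choose j = (\<Sum>i\<le>j. (j choose i) * (k choose (j - i)))"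
    by (simp add: vandermonde)
  also have "\<dots> = (\<Sum>i\<le>j. (j choose (j - i)) * (k choose (j - i)))"
    by (rule sum.cong) (auto simp: binomial_symmetric[symmetric])
  also have "\<dots> = (\<Sum>i\<le>j. (j choose i) * (k choose i))"
    by (rule sum.reindex_bij_witness[where i="\<lambda>i. j - i" and j="\<lambda>i. j - i"]) auto
  also have "\<dots> = (\<Sum>i\<le>n. (j choose i) * (k choose i))"
    using that by (intro sum.mono_neutral_left) (auto simp: binomial_eq_0)
  finally show ?thesis by (simp flip: of_nat_mult of_nat_sum)
qed

lemma laguerre_orth:
  "(\<Sum>j\<le>n. \<Sum>k\<le>m. real (n choose j) * (-1)^j / fact j * (real (m choose k) * (-1)^k / fact k)
      * fact (j + k)) = (if n = m then 1 else 0)"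
proof -
  have "(\<Sum>j\<le>n. \<Sum>k\<le>m. real (n choose j) * (-1)^j / fact j * (real (m choose k) * (-1)^k / fact k)
      * fact (j + k)) =
     (\<Sum>j\<le>n. \<Sum>k\<le>m. \<Sum>i\<le>n. (real (n choose j) * (-1)^j * real (j choose i)) *
          (real (m choose k) * (-1)^k * real (k choose i)))"
  proof (intro sum.cong refl)
    fix j k assume "j \<in> {..n}" "k \<in> {..m}"
    then have "fact (j + k) = (fact j * fact k) * real ((j + k) choose j)"
      using fact_binom[of j k] by (simp add: field_simps)
    also have "\<dots> = (fact j * fact k) * (\<Sum>i\<le>n. real (j choose i) * real (k choose i))"
      using \<open>j \<in> _\<close> by (subst binom_vdm[of j n]) auto
    finally show "real (n choose j) * (-1)^j / fact j * (real (m choose k) * (-1)^k / fact k)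
      * fact (j + k) = (\<Sum>i\<le>n. (real (n choose j) * (-1)^j * real (j choose i)) *
          (real (m choose k) * (-1)^k * real (k choose i)))"
      by (simp add: sum_distrib_left field_simps)
  qed
  also have "\<dots> = (\<Sum>i\<le>n. (\<Sum>j\<le>n. real (n choose j) * (-1)^j * real (j choose i)) *
          (\<Sum>k\<le>m. real (m choose k) * (-1)^k * real (k choose i)))"
  proof -
    let ?A = "\<lambda>j i. real (n choose j) * (-1)^j * real (j choose i)"
    let ?B = "\<lambda>k i. real (m choose k) * (-1)^k * real (k choose i)"
    have "(\<Sum>j\<le>n. \<Sum>k\<le>m. \<Sum>i\<le>n. ?A j i * ?B k i) = (\<Sum>j\<le>n. \<Sum>i\<le>n. \<Sum>k\<le>m. ?A j i * ?B k i)"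
      by (rule sum.cong[OF refl], rule sum.swap)
    also have "\<dots> = (\<Sum>i\<le>n. \<Sum>j\<le>n. \<Sum>k\<le>m. ?A j i * ?B k i)"
      by (rule sum.swap)
    also have "\<dots> = (\<Sum>i\<le>n. (\<Sum>j\<le>n. ?A j i) * (\<Sum>k\<le>m. ?B k i))"
      by (simp only: sum_product)
    finally show ?thesis .
  qed
  also have "\<dots> = (\<Sum>i\<le>n. (if i = n then (-1)^n else 0) * (if i = m then (-1)^m else 0))"
    by (simp add: alt_choose_choose)
  also have "\<dots> = (if n = m then 1 else 0)"
  proof -
    have "(\<Sum>i\<le>n. (if i = n then (-1)^n else 0) * (if i = m then (-1)^m else 0) :: real)
        = (\<Sum>i\<le>n. (if i = n \<and> n = m then 1 else 0))"
      by (rule sum.cong) (auto simp flip: power_add)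
    then show ?thesis by simp
  qed
  finally show ?thesis .
qed


lemma moment:
  fixes j a :: nat
  shows "((\<lambda>x::real. ln x ^ j / x ^ (a+2)) has_integral (fact j / real (a+1) ^ (j+1))) {1..}"
  using moment_gen[of "a+1" j] by simp

lemma moment0: "((\<lambda>x::real. ln x ^ j / x ^ 2) has_integral fact j) {1..}"
  using moment[of j 0] by (simp add: power2_eq_square)

definition lag :: "nat \<Rightarrow> nat \<Rightarrow> real" where
  "lag n k = real (n choose k) * (-1)^k / fact k"

definition psi :: "nat \<Rightarrow> real \<Rightarrow> real" where
  "psi n x = (\<Sum>k\<le>n. lag n k * ln x ^ k) / x"

definition envb :: "nat \<Rightarrow> real \<Rightarrow> real" where
  "envb n x = (\<Sum>k\<le>n. \<bar>lag n k\<bar> * (ln x ^ k / x ^ 2))"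

definition good :: "(real \<Rightarrow> real) \<Rightarrow> bool" where
  "good g \<longleftrightarrow> g \<in> borel_measurable (lebesgue_on {1..}) \<and> (\<exists>C. \<forall>x\<ge>1. \<bar>g x\<bar> \<le> C / x)"

lemma envb_int: "envb n integrable_on {1..}"
  unfolding envb_def
  by (intro integrable_sum integrable_on_mult_right has_integral_integrable[OF moment0]) auto

lemma envb_nonneg: "x \<ge> 1 \<Longrightarrow> envb n x \<ge> 0"
  unfolding envb_def by (intro sum_nonneg) auto

lemma psi_bound: "x \<ge> 1 \<Longrightarrow> \<bar>psi n x\<bar> / x \<le> envb n x"
proof -
  assume x: "x \<ge> 1"
  have "\<bar>psi n x\<bar> / x = \<bar>\<Sum>k\<le>n. lag n k * ln x ^ k\<bar> / x^2"
    using x by (simp add: psi_def power2_eq_square abs_divide)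
  also have "\<dots> \<le> (\<Sum>k\<le>n. \<bar>lag n k * ln x ^ k\<bar>) / x^2"
    by (intro divide_right_mono sum_abs) auto
  also have "\<dots> = envb n x"
    using x by (simp add: envb_def sum_divide_distrib abs_mult)
  finally show ?thesis .
qed

lemma psi_cont: "continuous_on {1..} (psi n)"
  unfolding psi_def by (intro continuous_intros) auto

lemma psi_meas: "psi n \<in> borel_measurable (lebesgue_on {1..})"
  by (intro continuous_imp_measurable_on_sets_lebesgue psi_cont) auto

lemma psi_orth: "((\<lambda>x. psi n x * psi m x) has_integral (if n = m then 1 else 0)) {1..}"
proof -
  have eq: "psi n x * psi m x = (\<Sum>j\<le>n. \<Sum>k\<le>m. lag n j * lag m k * (ln x ^ (j+k) / x ^ 2))" for x
  proof -
    have "psi n x * psi m x = (\<Sum>k\<le>n. lag n k * ln x ^ k) * (\<Sum>k\<le>m. lag m k * ln x ^ k) / x^2"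
      by (simp add: psi_def power2_eq_square)
    also have "\<dots> = (\<Sum>j\<le>n. \<Sum>k\<le>m. lag n j * ln x ^ j * (lag m k * ln x ^ k)) / x^2"
      by (simp only: sum_product)
    also have "\<dots> = (\<Sum>j\<le>n. \<Sum>k\<le>m. lag n j * lag m k * (ln x ^ (j+k) / x ^ 2))"
      by (simp add: sum_divide_distrib power_add mult_ac)
    finally show ?thesis .
  qed
  have "((\<lambda>x. \<Sum>j\<le>n. \<Sum>k\<le>m. lag n j * lag m k * (ln x ^ (j+k) / x ^ 2)) has_integral
        (\<Sum>j\<le>n. \<Sum>k\<le>m. lag n j * lag m k * fact (j+k))) {1..}"
    by (intro has_integral_sum has_integral_mult_right moment0) auto
  also have "(\<Sum>j\<le>n. \<Sum>k\<le>m. lag n j * lag m k * fact (j+k)) = (if n = m then 1 else 0)"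
    using laguerre_orth[of n m] by (simp add: lag_def mult_ac)
  finally show ?thesis unfolding eq .
qed

lemma good_prod_int:
  assumes "good g" shows "(\<lambda>x. g x * psi n x) integrable_on {1..}"
proof -
  from assms obtain C where g: "g \<in> borel_measurable (lebesgue_on {1..})" and C: "\<forall>x\<ge>1. \<bar>g x\<bar> \<le> C / x"
    by (auto simp: good_def)
  show ?thesis
  proof (rule measurable_bounded_by_integrable_imp_integrable)
    show "(\<lambda>x. g x * psi n x) \<in> borel_measurable (lebesgue_on {1..})"
      using g psi_meas by measurable
    show "(\<lambda>x. \<bar>C\<bar> * envb n x) integrable_on {1..}"
      using envb_int by (intro integrable_on_mult_right)
    fix x :: real assume x: "x \<in> {1..}"
    have "norm (g x * psi n x) = \<bar>g x\<bar> * \<bar>psi n x\<bar>" by (simp add: abs_mult)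
    also have "\<dots> \<le> (\<bar>C\<bar> / x) * \<bar>psi n x\<bar>"
      using C x by (intro mult_right_mono) (auto intro: order_trans[OF _ divide_right_mono[of C "\<bar>C\<bar>"]])
    also have "\<dots> = \<bar>C\<bar> * (\<bar>psi n x\<bar> / x)" by simp
    also have "\<dots> \<le> \<bar>C\<bar> * envb n x"
      using x psi_bound[of x n] by (intro mult_left_mono) auto
    finally show "norm (g x * psi n x) \<le> \<bar>C\<bar> * envb n x" .
  qed auto
qed

lemma good_sq_int:
  assumes "good g" shows "(\<lambda>x. g x ^ 2) integrable_on {1..}"
proof -
  from assms obtain C where g: "g \<in> borel_measurable (lebesgue_on {1..})" and C: "\<forall>x\<ge>1. \<bar>g x\<bar> \<le> C / x"
    by (auto simp: good_def)
  show ?thesis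
  proof (rule measurable_bounded_by_integrable_imp_integrable)
    show "(\<lambda>x. g x ^ 2) \<in> borel_measurable (lebesgue_on {1..})"
      using g by measurable
    show "(\<lambda>x. C^2 * (ln x ^ 0 / x ^ 2)) integrable_on {1..}"
      by (intro integrable_on_mult_right has_integral_integrable[OF moment0])
    fix x :: real assume x: "x \<in> {1..}"
    have "\<bar>g x\<bar> \<le> \<bar>C\<bar> / x" using C x by (auto intro: order_trans[OF _ divide_right_mono[of C "\<bar>C\<bar>"]])
    then have "\<bar>g x\<bar>^2 \<le> (\<bar>C\<bar> / x)^2" by (intro power_mono) auto
    then show "norm (g x ^ 2) \<le> C^2 * (ln x ^ 0 / x ^ 2)"
      by (simp add: power_divide)
  qed auto
qed



definition coef :: "(real \<Rightarrow> real) \<Rightarrow> nat \<Rightarrow> real" where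
  "coef g n = integral {1..} (\<lambda>x. g x * psi n x)"

definition rem :: "(real \<Rightarrow> real) \<Rightarrow> nat \<Rightarrow> real \<Rightarrow> real" where
  "rem g N x = g x - (\<Sum>n<N. coef g n * psi n x)"

lemma bessel:
  assumes "good g"
  shows "((\<lambda>x. rem g N x ^ 2) has_integral (integral {1..} (\<lambda>x. g x^2) - (\<Sum>n<N. coef g n ^ 2))) {1..}"
proof -
  have eq: "rem g N x ^ 2 = g x ^ 2 - 2 * (\<Sum>n<N. coef g n * (g x * psi n x))
      + (\<Sum>n<N. \<Sum>m<N. coef g n * coef g m * (psi n x * psi m x))" for x
    by (simp add: rem_def power2_eq_square algebra_simps sum_distrib_left sum_distrib_right sum_product)
  have i1: "((\<lambda>x. g x ^ 2) has_integral integral {1..} (\<lambda>x. g x^2)) {1..}"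
    using good_sq_int[OF assms] by (simp add: integrable_integral)
  have i2: "((\<lambda>x. \<Sum>n<N. coef g n * (g x * psi n x)) has_integral (\<Sum>n<N. coef g n * coef g n)) {1..}"
    by (intro has_integral_sum has_integral_mult_right)
       (auto simp: coef_def intro!: integrable_integral good_prod_int assms)
  have i3: "((\<lambda>x. \<Sum>n<N. \<Sum>m<N. coef g n * coef g m * (psi n x * psi m x)) has_integral
             (\<Sum>n<N. \<Sum>m<N. coef g n * coef g m * (if n = m then 1 else 0))) {1..}"
    by (intro has_integral_sum has_integral_mult_right psi_orth) auto
  have "(\<Sum>n<N. \<Sum>m<N. coef g n * coef g m * (if n = m then 1 else 0)) = (\<Sum>n<N. coef g n ^ 2)"
    by (simp add: if_distrib power2_eq_square cong: if_cong)
  with has_integral_add[OF has_integral_diff[OF i1 has_integral_mult_right[OF i2, of 2]] i3]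
  show ?thesis
    unfolding eq by (simp add: power2_eq_square)
qed

lemma good_rem_nonneg:
  assumes "good g"
  shows "(\<Sum>n<N. coef g n ^ 2) \<le> integral {1..} (\<lambda>x. g x^2)"
  using has_integral_nonneg[OF bessel[OF assms, of N]] by auto



definition polyf :: "(nat \<Rightarrow> real) \<Rightarrow> nat \<Rightarrow> real \<Rightarrow> real" where
  "polyf a M x = (\<Sum>i\<le>M. a i / x ^ (i+1))"

lemma good_polyf: "good (polyf a M)"
  unfolding good_def
proof
  show "polyf a M \<in> borel_measurable (lebesgue_on {1..})"
    unfolding polyf_def
    by (intro continuous_imp_measurable_on_sets_lebesgue continuous_intros) auto
  show "\<exists>C. \<forall>x\<ge>1. \<bar>polyf a M x\<bar> \<le> C / x"
  proof (intro exI allI impI)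
    fix x :: real assume x: "x \<ge> 1"
    have "\<bar>polyf a M x\<bar> \<le> (\<Sum>i\<le>M. \<bar>a i / x ^ (i+1)\<bar>)"
      unfolding polyf_def by (rule sum_abs)
    also have "\<dots> \<le> (\<Sum>i\<le>M. \<bar>a i\<bar> / x)"
    proof (intro sum_mono)
      fix i
      have "x \<le> x ^ (i+1)" using x by (simp add: self_le_power)
      then show "\<bar>a i / x ^ (i+1)\<bar> \<le> \<bar>a i\<bar> / x"
        using x by (simp add: abs_divide divide_left_mono)
    qed
    also have "\<dots> = (\<Sum>i\<le>M. \<bar>a i\<bar>) / x" by (simp add: sum_divide_distrib)
    finally show "\<bar>polyf a M x\<bar> \<le> (\<Sum>i\<le>M. \<bar>a i\<bar>) / x" .
  qed
qed

definition ee :: "nat \<Rightarrow> nat \<Rightarrow> real" where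
  "ee n i = real i ^ n / real (i+1) ^ (n+1)"

lemma psi_mono_int: "((\<lambda>x. psi n x / x ^ (i+1)) has_integral ee n i) {1..}"
proof -
  have eq: "psi n x / x ^ (i+1) = (\<Sum>k\<le>n. lag n k * (ln x ^ k / x ^ (i+2)))" for x :: real
    by (simp add: psi_def sum_divide_distrib field_simps)
  have "((\<lambda>x. \<Sum>k\<le>n. lag n k * (ln x ^ k / x ^ (i+2))) has_integral
          (\<Sum>k\<le>n. lag n k * (fact k / real (i+1) ^ (k+1)))) {1..}"
    by (intro has_integral_sum has_integral_mult_right moment) auto
  also have "(\<Sum>k\<le>n. lag n k * (fact k / real (i+1) ^ (k+1))) =
      (\<Sum>k\<le>n. real (n choose k) * (-1 / real (i+1))^k * 1 ^ (n-k)) / real (i+1)"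
    unfolding sum_divide_distrib
  proof (rule sum.cong[OF refl])
    fix k
    have "(-1 / real (i+1)) ^ k = (-1)^k / real (i+1) ^ k" by (simp only: power_divide)
    then show "lag n k * (fact k / real (i+1) ^ (k+1)) =
      real (n choose k) * (-1 / real (i+1))^k * 1 ^ (n-k) / real (i+1)"
      by (simp add: lag_def)
  qed
  also have "\<dots> = (1 - 1 / real (i+1)) ^ n / real (i+1)"
    by (subst binomial_ring[symmetric]) simp
  also have "\<dots> = ee n i"
    by (simp add: ee_def field_simps power_divide)
  finally show ?thesis unfolding eq .
qed

lemma coef_polyf: "coef (polyf a M) n = (\<Sum>i\<le>M. a i * ee n i)"
proof -
  have "((\<lambda>x. polyf a M x * psi n x) has_integral (\<Sum>i\<le>M. a i * ee n i)) {1..}"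
  proof -
    have eq: "polyf a M x * psi n x = (\<Sum>i\<le>M. a i * (psi n x / x ^ (i+1)))" for x
      by (simp add: polyf_def sum_distrib_right)
    show ?thesis unfolding eq
      by (intro has_integral_sum has_integral_mult_right psi_mono_int) auto
  qed
  then show ?thesis by (simp add: coef_def integral_unique)
qed

lemma polyf_sq_int: "((\<lambda>x. polyf a M x ^ 2) has_integral (\<Sum>i\<le>M. \<Sum>k\<le>M. a i * a k / real (i+k+1))) {1..}"
proof -
  have eq: "polyf a M x ^ 2 = (\<Sum>i\<le>M. \<Sum>k\<le>M. a i * a k * (ln x ^ 0 / x ^ ((i+k)+2)))" for x :: real
    by (simp add: polyf_def power2_eq_square sum_product power_add field_simps)
  have "((\<lambda>x. \<Sum>i\<le>M. \<Sum>k\<le>M. a i * a k * (ln x ^ 0 / x ^ ((i+k)+2))) has_integral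
         (\<Sum>i\<le>M. \<Sum>k\<le>M. a i * a k * (fact 0 / real ((i+k)+1) ^ (0+1)))) {1..}"
    by (intro has_integral_sum has_integral_mult_right moment) auto
  then show ?thesis unfolding eq by simp
qed

lemma ee_sums: "(\<lambda>n. ee n i * ee n k) sums (1 / real (i+k+1))"
proof -
  define r where "r = real i * real k / (real (i+1) * real (k+1))"
  have "real i * real k < real (i+1) * real (k+1)" by (simp add: algebra_simps)
  then have r: "\<bar>r\<bar> < 1" unfolding r_def by (simp add: abs_of_nonneg divide_less_eq)
  have "(\<lambda>n. 1 / (real (i+1) * real (k+1)) * r ^ n) sums (1 / (real (i+1) * real (k+1)) * (1 / (1 - r)))"
    using r by (intro sums_mult geometric_sums) simp
  also have "(\<lambda>n. 1 / (real (i+1) * real (k+1)) * r ^ n) = (\<lambda>n. ee n i * ee n k)"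
  proof
    fix n
    have "r ^ n = (real i ^ n * real k ^ n) / (real (i+1) ^ n * real (k+1) ^ n)"
      unfolding r_def by (simp only: power_divide power_mult_distrib)
    moreover have "ee n i * ee n k = 1 / (real (i+1) * real (k+1)) * ((real i ^ n * real k ^ n) / (real (i+1) ^ n * real (k+1) ^ n))"
      unfolding ee_def by (simp only: power_Suc times_divide_times_eq) (simp add: mult_ac)
    ultimately show "1 / (real (i+1) * real (k+1)) * r ^ n = ee n i * ee n k"
      by simp
  qed
  also have "1 - r = real (i+k+1) / (real (i+1) * real (k+1))"
  proof -
    have d: "real (i+1) * real (k+1) \<noteq> 0" by simp
    show ?thesis unfolding r_def
      using d by (simp add: eq_divide_eq left_diff_distrib del: of_nat_add) (simp add: algebra_simps)
  qed
  then have "1 / (real (i+1) * real (k+1)) * (1 / (1 - r)) = 1 / real (i+k+1)"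
    by simp
  finally show ?thesis .
qed

lemma parseval_polyf: "(\<lambda>n. coef (polyf a M) n ^ 2) sums integral {1..} (\<lambda>x. polyf a M x ^ 2)"
proof -
  have "(\<lambda>n. \<Sum>i\<le>M. \<Sum>k\<le>M. a i * a k * (ee n i * ee n k)) sums (\<Sum>i\<le>M. \<Sum>k\<le>M. a i * a k * (1 / real (i+k+1)))"
    by (intro sums_sum sums_mult ee_sums)
  moreover have "(\<lambda>n. \<Sum>i\<le>M. \<Sum>k\<le>M. a i * a k * (ee n i * ee n k)) = (\<lambda>n. coef (polyf a M) n ^ 2)"
    by (simp add: coef_polyf power2_eq_square sum_product mult_ac)
  ultimately show ?thesis using polyf_sq_int[of a M] by (simp add: integral_unique)
qed



lemma good_diff: "good f \<Longrightarrow> good g \<Longrightarrow> good (\<lambda>x. f x - g x)"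
  unfolding good_def
proof (elim conjE exE, intro conjI)
  fix C D assume f: "f \<in> borel_measurable (lebesgue_on {1..})" and g: "g \<in> borel_measurable (lebesgue_on {1..})"
    and C: "\<forall>x\<ge>1. \<bar>f x\<bar> \<le> C / x" and D: "\<forall>x\<ge>1. \<bar>g x\<bar> \<le> D / x"
  show "(\<lambda>x. f x - g x) \<in> borel_measurable (lebesgue_on {1..})" using f g by measurable
  show "\<exists>C. \<forall>x\<ge>1. \<bar>f x - g x\<bar> \<le> C / x"
  proof (intro exI allI impI)
    fix x :: real assume "x \<ge> 1"
    then have "\<bar>f x - g x\<bar> \<le> C / x + D / x" using C D by (smt (verit))
    then show "\<bar>f x - g x\<bar> \<le> (C + D) / x" by (simp add: add_divide_distrib)
  qed
qed

lemma coef_diff: "good f \<Longrightarrow> good g \<Longrightarrow> coef (\<lambda>x. f x - g x) n = coef f n - coef g n"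
  unfolding coef_def
  by (simp add: left_diff_distrib integral_diff good_prod_int)

lemma rem_split: "good f \<Longrightarrow> good g \<Longrightarrow> rem f N x = rem g N x + rem (\<lambda>x. f x - g x) N x"
  by (simp add: rem_def coef_diff left_diff_distrib sum_subtractf)

lemma parseval_abstract:
  assumes F: "good F"
    and approx: "\<And>e. e > 0 \<Longrightarrow> \<exists>a M. integral {1..} (\<lambda>x. (F x - polyf a M x)^2) < e"
  shows "(\<lambda>n. coef F n ^ 2) sums integral {1..} (\<lambda>x. F x^2)"
  unfolding sums_def
proof (rule LIMSEQ_I)
  fix e :: real assume e: "e > 0"
  obtain a M where aM: "integral {1..} (\<lambda>x. (F x - polyf a M x)^2) < e / 4"
    using approx[of "e/4"] e by auto
  define P where "P = polyf a M"
  define G where "G = (\<lambda>x. F x - P x)"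
  have P: "good P" unfolding P_def by (rule good_polyf)
  have G: "good G" unfolding G_def by (intro good_diff F P)
  have "(\<lambda>N. \<Sum>n<N. coef P n ^ 2) \<longlonglongrightarrow> integral {1..} (\<lambda>x. P x^2)"
    using parseval_polyf[of a M] unfolding P_def sums_def .
  then obtain N0 where N0: "\<And>N. N \<ge> N0 \<Longrightarrow> norm ((\<Sum>n<N. coef P n ^ 2) - integral {1..} (\<lambda>x. P x^2)) < e / 4"
    using e by (metis LIMSEQ_D divide_pos_pos zero_less_numeral)
  show "\<exists>no. \<forall>N\<ge>no. norm ((\<Sum>n<N. coef F n ^ 2) - integral {1..} (\<lambda>x. F x^2)) < e"
  proof (intro exI allI impI)
    fix N assume N: "N \<ge> N0"
    have iF: "((\<lambda>x. rem F N x ^ 2) has_integral (integral {1..} (\<lambda>x. F x^2) - (\<Sum>n<N. coef F n ^ 2))) {1..}"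
      by (rule bessel[OF F])
    have iP: "((\<lambda>x. rem P N x ^ 2) has_integral (integral {1..} (\<lambda>x. P x^2) - (\<Sum>n<N. coef P n ^ 2))) {1..}"
      by (rule bessel[OF P])
    have iG: "((\<lambda>x. rem G N x ^ 2) has_integral (integral {1..} (\<lambda>x. G x^2) - (\<Sum>n<N. coef G n ^ 2))) {1..}"
      by (rule bessel[OF G])
    have "integral {1..} (\<lambda>x. F x^2) - (\<Sum>n<N. coef F n ^ 2) \<le>
          2 * (integral {1..} (\<lambda>x. P x^2) - (\<Sum>n<N. coef P n ^ 2)) +
          2 * (integral {1..} (\<lambda>x. G x^2) - (\<Sum>n<N. coef G n ^ 2))"
    proof (rule has_integral_le[OF iF has_integral_add[OF has_integral_mult_right[OF iP] has_integral_mult_right[OF iG]]])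
      fix x :: real
      have "rem F N x = rem P N x + rem G N x"
        unfolding G_def by (rule rem_split[OF F P])
      moreover have "(rem P N x + rem G N x)^2 = 2 * rem P N x ^ 2 + 2 * rem G N x ^ 2 - (rem P N x - rem G N x)^2"
        by (simp add: power2_eq_square algebra_simps)
      moreover have "0 \<le> (rem P N x - rem G N x)^2" by simp
      ultimately show "rem F N x ^ 2 \<le> 2 * rem P N x ^ 2 + 2 * rem G N x ^ 2"
        by (metis diff_le_eq le_add_same_cancel1)
    qed
    also have "\<dots> \<le> 2 * (e / 4) + 2 * integral {1..} (\<lambda>x. G x^2)"
    proof -
      have "integral {1..} (\<lambda>x. P x^2) - (\<Sum>n<N. coef P n ^ 2) < e / 4"
        using N0[OF N] unfolding real_norm_def by linarith
      moreover have "0 \<le> (\<Sum>n<N. coef G n ^ 2)" by (intro sum_nonneg) auto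
      ultimately show ?thesis by (simp add: algebra_simps)
    qed
    also have "\<dots> < e"
      using aM unfolding G_def P_def by simp
    finally have "integral {1..} (\<lambda>x. F x^2) - (\<Sum>n<N. coef F n ^ 2) < e" .
    moreover have "0 \<le> integral {1..} (\<lambda>x. F x^2) - (\<Sum>n<N. coef F n ^ 2)"
      using good_rem_nonneg[OF F, of N] by simp
    ultimately show "norm ((\<Sum>n<N. coef F n ^ 2) - integral {1..} (\<lambda>x. F x^2)) < e"
      by simp
  qed
qed



definition Fq :: "real \<Rightarrow> real" where "Fq x = frac x / x"

lemma meas_ident [measurable]: "(\<lambda>x::real. x) \<in> borel_measurable (lebesgue_on S)"
  using id_borel_measurable_lebesgue_on unfolding id_def .

lemma frac_meas: "(\<lambda>x::real. frac x) \<in> borel_measurable (lebesgue_on S)"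
proof -
  have "(\<lambda>x::real. x - real_of_int \<lfloor>x\<rfloor>) \<in> borel_measurable borel"
    by (intro borel_measurable_diff borel_measurable_real_floor) simp
  from measurable_compose[OF id_borel_measurable_lebesgue_on[of S] this]
  show ?thesis by (simp add: frac_def)
qed

lemma good_Fq: "good Fq"
  unfolding good_def
proof
  show "Fq \<in> borel_measurable (lebesgue_on {1..})"
    unfolding Fq_def using frac_meas by measurable
  show "\<exists>C. \<forall>x\<ge>1. \<bar>Fq x\<bar> \<le> C / x"
    by (intro exI[of _ 1] allI impI) (auto simp: Fq_def abs_divide frac_lt_1 divide_right_mono less_imp_le)
qed

definition sm :: "nat \<Rightarrow> real \<Rightarrow> real" where
  "sm m x = min (frac x) (real m * (1 - frac x))"

lemma sm_nonneg: "sm m x \<ge> 0"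
  by (simp add: sm_def frac_lt_1 less_imp_le)

lemma sm_le: "sm m x \<le> frac x" by (simp add: sm_def)

lemma sm_le1: "sm m x \<le> 1" using sm_le[of m x] frac_lt_1[of x] by linarith

lemma isCont_sm: "isCont (sm m) x"
proof (cases "x \<in> \<int>")
  case False
  then show ?thesis unfolding sm_def
    by (intro continuous_intros continuous_frac)
next
  case True
  then obtain k where k: "x = of_int k" by (auto elim: Ints_cases)
  have "frac x = 0" using True by simp
  then have "sm m x = 0" by (simp add: sm_def del: frac_eq_0_iff)
  have bound: "sm m y \<le> (real m + 1) * \<bar>y - x\<bar>" if "dist y x < 1" for y
  proof (cases "y \<ge> x")
    case True
    with that k have "floor y = k" by (auto simp: floor_eq_iff dist_real_def)
    then have "frac y = y - x" using k by (simp add: frac_def)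
    then have "sm m y \<le> y - x" using sm_le[of m y] by simp
    also have "\<dots> \<le> (real m + 1) * (y - x)"
      using True mult_nonneg_nonneg[of "real m" "y - x"] by (simp add: algebra_simps)
    finally show ?thesis using True by simp
  next
    case False
    with that k have "floor y = k - 1" by (auto simp: floor_eq_iff dist_real_def)
    then have "1 - frac y = x - y" using k by (simp add: frac_def)
    then have "sm m y \<le> real m * (x - y)" by (simp add: sm_def)
    also have "\<dots> \<le> (real m + 1) * \<bar>y - x\<bar>" using False by (intro mult_mono) auto
    finally show ?thesis .
  qed
  have "(sm m \<longlongrightarrow> 0) (at x)"
  proof (rule tendsto_sandwich[where f="\<lambda>_. 0" and h="\<lambda>y. (real m + 1) * \<bar>y - x\<bar>"])
    show "\<forall>\<^sub>F y in at x. 0 \<le> sm m y" by (simp add: sm_nonneg)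
    show "\<forall>\<^sub>F y in at x. sm m y \<le> (real m + 1) * \<bar>y - x\<bar>"
      using bound by (auto simp: eventually_at intro!: exI[of _ 1])
    show "((\<lambda>y. (real m + 1) * \<bar>y - x\<bar>) \<longlongrightarrow> 0) (at x)"
      by (rule tendsto_eq_intros refl | simp)+
  qed simp
  then show ?thesis using \<open>sm m x = 0\<close> by (simp add: isCont_def)
qed

definition gm :: "nat \<Rightarrow> real \<Rightarrow> real" where
  "gm m y = min 1 (real m * y) * sm m (1 / y)"

lemma gm_isCont: "isCont (gm m) y"
proof -
  show "isCont (gm m) y"
  proof (cases "y = 0")
    case False
    show ?thesis unfolding gm_def
      using False by (intro continuous_intros isCont_o2[OF _ isCont_sm]) auto
  next
    case True
    have "gm m 0 = 0" by (simp add: gm_def)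
    have "((gm m) \<longlongrightarrow> 0) (at 0)"
    proof (rule tendsto_sandwich[where f="\<lambda>y. - (real m * \<bar>y\<bar>)" and h="\<lambda>y. real m * \<bar>y\<bar>"])
      have "\<bar>gm m z\<bar> \<le> real m * \<bar>z\<bar>" for z
      proof -
        have "\<bar>gm m z\<bar> = \<bar>min 1 (real m * z)\<bar> * sm m (1/z)"
          by (simp add: gm_def abs_mult sm_nonneg)
        also have "\<dots> \<le> \<bar>real m * z\<bar> * 1"
          by (intro mult_mono sm_le1) (auto simp: sm_nonneg abs_le_iff)
        finally show ?thesis by (simp add: abs_mult)
      qed
      then have "- (real m * \<bar>z\<bar>) \<le> gm m z" "gm m z \<le> real m * \<bar>z\<bar>" for z
        by (metis abs_le_iff minus_le_iff)+
      then show "\<forall>\<^sub>F z in at 0. - (real m * \<bar>z\<bar>) \<le> gm m z" "\<forall>\<^sub>F z in at 0. gm m z \<le> real m * \<bar>z\<bar>"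
        by (auto intro!: always_eventually)
      show "((\<lambda>z. - (real m * \<bar>z\<bar>)) \<longlongrightarrow> 0) (at 0)" "((\<lambda>z. real m * \<bar>z\<bar>) \<longlongrightarrow> 0) (at 0)"
        by (rule tendsto_eq_intros refl | simp)+
    qed
    then show ?thesis using True \<open>gm m 0 = 0\<close> by (simp add: isCont_def)
  qed
qed

lemma gm_cont: "continuous_on S (gm m)"
  by (intro continuous_at_imp_continuous_on ballI gm_isCont)



definition Hm :: "nat \<Rightarrow> real \<Rightarrow> real" where "Hm m x = gm m (1 / x) / x"

lemma gm_inv: "x \<ge> 1 \<Longrightarrow> gm m (1 / x) = min 1 (real m / x) * sm m x"
  by (simp add: gm_def)

lemma gm_inv_bounds: "x \<ge> 1 \<Longrightarrow> 0 \<le> gm m (1 / x) \<and> gm m (1 / x) \<le> 1"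
  using sm_nonneg[of m x] sm_le1[of m x]
  by (auto simp: gm_inv intro!: mult_nonneg_nonneg mult_le_one)

lemma good_Hm: "good (Hm m)"
  unfolding good_def
proof
  have "continuous_on {1..} (Hm m)"
    unfolding Hm_def
    by (intro continuous_intros continuous_on_compose2[OF gm_cont[of UNIV m]]) auto
  then show "Hm m \<in> borel_measurable (lebesgue_on {1..})"
    by (intro continuous_imp_measurable_on_sets_lebesgue) auto
  show "\<exists>C. \<forall>x\<ge>1. \<bar>Hm m x\<bar> \<le> C / x"
    by (intro exI[of _ 1] allI impI) (auto simp: Hm_def abs_divide gm_inv_bounds divide_right_mono)
qed

lemma Hm_lim: "x \<ge> 1 \<Longrightarrow> (\<lambda>m. Hm m x) \<longlonglongrightarrow> Fq x"
proof -
  assume x: "x \<ge> 1"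
  have "frac x < 1" by (rule frac_lt_1)
  obtain N :: nat where N: "real N > x + 1 / (1 - frac x)" using reals_Archimedean2 by blast
  have "Hm m x = Fq x" if "m \<ge> N" for m
  proof -
    have m: "real m > x + 1 / (1 - frac x)" using N that by (smt (verit) of_nat_le_iff)
    have "1 / (1 - frac x) \<ge> 0" using \<open>frac x < 1\<close> by simp
    then have "real m \<ge> x" using m by linarith
    then have "min 1 (real m / x) = 1" using x by simp
    have "real m * (1 - frac x) \<ge> (1 / (1 - frac x)) * (1 - frac x)"
      using m x \<open>frac x < 1\<close> by (intro mult_right_mono) auto
    then have "real m * (1 - frac x) \<ge> 1" using \<open>frac x < 1\<close> by simp
    then have "sm m x = frac x" unfolding sm_def using frac_lt_1[of x] by simp
    show ?thesis using x \<open>min 1 (real m / x) = 1\<close> \<open>sm m x = frac x\<close>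
      by (simp add: Hm_def gm_inv Fq_def)
  qed
  then show ?thesis
    by (intro tendsto_eventually) (auto simp: eventually_at_top_linorder)
qed

lemma inv_sq_int: "((\<lambda>x::real. 1 / x^2) has_integral 1) {1..}"
  using moment0[of 0] by simp

lemma approx_Fq:
  assumes e: "e > 0"
  shows "\<exists>a M. integral {1..} (\<lambda>x. (Fq x - polyf a M x)^2) < e"
proof -
  have lim: "(\<lambda>m. integral {1..} (\<lambda>x. (Fq x - Hm m x)^2)) \<longlonglongrightarrow> integral {1..} (\<lambda>x::real. 0)"
  proof (rule Equivalence_Lebesgue_Henstock_Integration.dominated_convergence(2)[where f="\<lambda>m x. (Fq x - Hm m x)^2" and h="\<lambda>x. 1/x^2" and g="\<lambda>x. 0" and S="{1..}"])
    show "(\<lambda>x. (Fq x - Hm m x)^2) integrable_on {1..}" for m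
      by (intro good_sq_int good_diff good_Fq good_Hm)
    show "(\<lambda>x::real. 1 / x^2) integrable_on {1..}" using inv_sq_int by blast
    fix m and x :: real assume x: "x \<in> {1..}"
    have "0 \<le> Fq x" "Fq x \<le> 1 / x" using x frac_lt_1[of x]
      by (auto simp: Fq_def divide_right_mono less_imp_le)
    moreover have "0 \<le> Hm m x" "Hm m x \<le> 1 / x" using x gm_inv_bounds[of x m]
      by (auto simp: Hm_def divide_right_mono)
    ultimately have "\<bar>Fq x - Hm m x\<bar> \<le> 1 / x" by linarith
    then have "\<bar>Fq x - Hm m x\<bar>^2 \<le> (1 / x)^2" by (intro power_mono) auto
    then show "norm ((Fq x - Hm m x)^2) \<le> 1 / x^2" by (simp add: power_divide)
  next
    fix x :: real assume x: "x \<in> {1..}"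
    show "(\<lambda>m. (Fq x - Hm m x)^2) \<longlonglongrightarrow> 0"
      using tendsto_power[OF tendsto_diff[OF tendsto_const Hm_lim], of x "Fq x" 2] x by simp
  qed
  then obtain m where m: "integral {1..} (\<lambda>x. (Fq x - Hm m x)^2) < e / 4"
  proof -
    from LIMSEQ_D[OF lim, of "e/4"] e obtain no where
      "\<forall>n\<ge>no. norm (integral {1..} (\<lambda>x. (Fq x - Hm n x)^2) - integral {1..} (\<lambda>x::real. 0)) < e/4"
      by auto
    then have "integral {1..} (\<lambda>x. (Fq x - Hm no x)^2) < e / 4" by auto
    then show ?thesis using that by blast
  qed
  define \<eta> where "\<eta> = sqrt (e / 8)"
  have \<eta>: "\<eta> > 0" "\<eta>^2 = e / 8" using e by (auto simp: \<eta>_def)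
  obtain q where q: "real_polynomial_function q" "\<And>y. y \<in> {0..1} \<Longrightarrow> \<bar>gm m y - q y\<bar> < \<eta>"
    using Stone_Weierstrass_real_polynomial_function[OF compact_Icc gm_cont \<eta>(1)] by blast
  obtain a M where aM: "q = (\<lambda>x. \<Sum>i\<le>M. a i * x^i)"
    using real_polynomial_function_imp_sum[OF q(1)] by blast
  have P: "polyf a M x = q (1 / x) / x" for x
    by (simp add: polyf_def aM sum_divide_distrib power_divide mult.commute)
  have le2: "integral {1..} (\<lambda>x. (Hm m x - polyf a M x)^2) \<le> integral {1..} (\<lambda>x. \<eta>^2 * (1 / x^2))"
  proof (rule integral_le)
    show "(\<lambda>x. (Hm m x - polyf a M x)^2) integrable_on {1..}"
      by (intro good_sq_int good_diff good_Hm good_polyf)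
    show "(\<lambda>x::real. \<eta>^2 * (1 / x^2)) integrable_on {1..}"
      using inv_sq_int by (intro integrable_on_mult_right) blast
    fix x :: real assume x: "x \<in> {1..}"
    then have "1 / x \<in> {0..1}" by auto
    then have "\<bar>gm m (1/x) - q (1/x)\<bar> < \<eta>" by (rule q(2))
    then have "\<bar>gm m (1/x) - q (1/x)\<bar> / x \<le> \<eta> / x" using x by (intro divide_right_mono) auto
    then have "\<bar>Hm m x - polyf a M x\<bar> \<le> \<eta> / x"
      by (simp add: Hm_def P diff_divide_distrib[symmetric] abs_divide) (use x in auto)
    then have "\<bar>Hm m x - polyf a M x\<bar>^2 \<le> (\<eta> / x)^2" by (intro power_mono) auto
    then show "(Hm m x - polyf a M x)^2 \<le> \<eta>^2 * (1 / x^2)" by (simp add: power_divide)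
  qed
  also have "\<dots> = \<eta>^2" using integral_unique[OF has_integral_mult_right[OF inv_sq_int, of "\<eta>^2"]] by simp
  finally have le2': "integral {1..} (\<lambda>x. (Hm m x - polyf a M x)^2) \<le> e / 8" using \<eta> by simp
  have "integral {1..} (\<lambda>x. (Fq x - polyf a M x)^2) \<le>
        integral {1..} (\<lambda>x. 2 * (Fq x - Hm m x)^2 + 2 * (Hm m x - polyf a M x)^2)"
  proof (rule integral_le)
    show "(\<lambda>x. (Fq x - polyf a M x)^2) integrable_on {1..}"
      by (intro good_sq_int good_diff good_Fq good_polyf)
    show "(\<lambda>x. 2 * (Fq x - Hm m x)^2 + 2 * (Hm m x - polyf a M x)^2) integrable_on {1..}"
      by (intro integrable_add integrable_on_mult_right good_sq_int good_diff good_Fq good_polyf good_Hm)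
    fix x :: real
    have "(Fq x - polyf a M x)^2 = 2 * (Fq x - Hm m x)^2 + 2 * (Hm m x - polyf a M x)^2
          - (Fq x - 2 * Hm m x + polyf a M x)^2"
      by (simp add: power2_eq_square algebra_simps)
    moreover have "0 \<le> (Fq x - 2 * Hm m x + polyf a M x)^2" by simp
    ultimately show "(Fq x - polyf a M x)^2 \<le> 2 * (Fq x - Hm m x)^2 + 2 * (Hm m x - polyf a M x)^2"
      by linarith
  qed
  also have "\<dots> = 2 * integral {1..} (\<lambda>x. (Fq x - Hm m x)^2) + 2 * integral {1..} (\<lambda>x. (Hm m x - polyf a M x)^2)"
    by (subst integral_add) (auto intro!: integrable_on_mult_right good_sq_int good_diff good_Fq good_polyf good_Hm)
  also have "\<dots> < e" using m le2' e by linarith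
  finally show ?thesis by blast
qed



lemma int_induct:
  fixes \<phi> :: "real \<Rightarrow> real"
  assumes step: "\<And>N. N \<ge> 1 \<Longrightarrow> (\<phi> has_integral (T (Suc N) - T N)) {real N..real (Suc N)}"
    and T1: "T 1 = 0"
  shows "N \<ge> 1 \<Longrightarrow> (\<phi> has_integral T N) {1..real N}"
proof (induction N rule: dec_induct[of 1])
  case base then show ?case using T1 has_integral_refl(2)[of \<phi> "1::real"] by simp
next
  case (step N)
  have "(\<phi> has_integral (T N + (T (Suc N) - T N))) {1..real (Suc N)}"
    by (rule has_integral_combine[OF _ _ step.IH assms(1)]) (use step.hyps in auto)
  then show ?case by simp
qed

lemma frac_on_piece:
  fixes N :: nat
  assumes "x \<in> {real N..real (Suc N)} - {real (Suc N)}"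
  shows "frac x = x - real N"
proof -
  from assms have "floor x = int N" by (auto simp: floor_eq_iff)
  then show ?thesis by (simp add: frac_def)
qed

lemma lim_int_nat:
  fixes \<phi> h :: "real \<Rightarrow> real"
  assumes meas: "\<phi> \<in> borel_measurable (lebesgue_on {1..})" and h: "h integrable_on {1..}"
    and bound: "\<And>x. x \<ge> 1 \<Longrightarrow> \<bar>\<phi> x\<bar> \<le> h x"
  shows "\<phi> integrable_on {1..}" "(\<lambda>N. integral {1..real N} \<phi>) \<longlonglongrightarrow> integral {1..} \<phi>"
proof -
  show int: "\<phi> integrable_on {1..}"
    by (rule measurable_bounded_by_integrable_imp_integrable[OF meas h]) (auto intro: bound)
  have "(\<lambda>N. integral {1..} (\<lambda>x. if x \<in> {1..real N} then \<phi> x else 0)) \<longlonglongrightarrow> integral {1..} \<phi>"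
  proof (rule Equivalence_Lebesgue_Henstock_Integration.dominated_convergence(2)[where S="{1..}" and h=h and f="\<lambda>N x. if x \<in> {1..real N} then \<phi> x else 0" and g=\<phi>])
    show "(\<lambda>x. if x \<in> {1..real N} then \<phi> x else 0) integrable_on {1..}" for N
    proof -
      have "{1..real N} \<inter> {1..} = {1..real N}" by auto
      then show ?thesis unfolding integrable_restrict_Int using int by (auto intro: integrable_on_subinterval)
    qed
    show "h integrable_on {1..}" by fact
    fix N and x :: real assume x: "x \<in> {1..}"
    show "norm (if x \<in> {1..real N} then \<phi> x else 0) \<le> h x"
      using bound[of x] x by auto
  next
    fix x :: real assume x: "x \<in> {1..}"
    obtain M :: nat where M: "real M \<ge> x" using real_arch_simple by blast
    have "\<forall>\<^sub>F N in sequentially. (if x \<in> {1..real N} then \<phi> x else 0) = \<phi> x"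
      using x M by (auto simp: eventually_at_top_linorder intro!: exI[of _ M] order_trans[OF M])
    then show "(\<lambda>N. if x \<in> {1..real N} then \<phi> x else 0) \<longlonglongrightarrow> \<phi> x"
      by (rule tendsto_eventually)
  qed
  moreover have "integral {1..} (\<lambda>x. if x \<in> {1..real N} then \<phi> x else 0) = integral {1..real N} \<phi>" for N
    by (subst integral_restrict_Int) (auto simp: Int_absorb2 intro!: arg_cong[where f="\<lambda>S. integral S \<phi>"])
  ultimately show "(\<lambda>N. integral {1..real N} \<phi>) \<longlonglongrightarrow> integral {1..} \<phi>" by simp
qed

definition T1 :: "nat \<Rightarrow> real" where
  "T1 N = 2 * real N - 1 - harm N - 2 * real N * ln (real N) + 2 * ln (fact N)"

lemma part1_piece:
  fixes N :: nat assumes N: "N \<ge> 1"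
  shows "((\<lambda>x. frac x ^ 2 / x ^ 2) has_integral (T1 (Suc N) - T1 N)) {real N..real (Suc N)}"
proof -
  define A where "A = (\<lambda>x::real. x - 2 * real N * ln x - real N ^ 2 / x)"
  have "((\<lambda>x. (x - real N) ^ 2 / x ^ 2) has_integral (A (real (Suc N)) - A (real N))) {real N..real (Suc N)}"
  proof (rule fundamental_theorem_of_calculus)
    show "real N \<le> real (Suc N)" by simp
    fix x assume x: "x \<in> {real N..real (Suc N)}"
    then have "x > 0" using N by auto
    have "(A has_real_derivative (x - real N) ^ 2 / x ^ 2) (at x)"
      unfolding A_def using \<open>x > 0\<close>
      by (auto intro!: derivative_eq_intros simp: field_simps power2_eq_square)
    then show "(A has_vector_derivative (x - real N) ^ 2 / x ^ 2) (at x within {real N..real (Suc N)})"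
      by (simp add: has_real_derivative_iff_has_vector_derivative[symmetric] has_field_derivative_at_within)
  qed
  also have "A (real (Suc N)) - A (real N) = T1 (Suc N) - T1 N"
  proof -
    have "ln (fact (Suc N) :: real) = ln (real (Suc N)) + ln (fact N)"
      by (simp add: ln_mult)
    then show ?thesis using N
      by (simp add: A_def T1_def harm_Suc field_simps power2_eq_square) 
  qed
  finally have I: "((\<lambda>x. (x - real N) ^ 2 / x ^ 2) has_integral (T1 (Suc N) - T1 N)) {real N..real (Suc N)}" .
  show ?thesis
    by (rule has_integral_spike_finite[OF _ _ I, of "{real (Suc N)}"]) (auto simp: frac_on_piece)
qed



definition dd :: "nat \<Rightarrow> real" where
  "dd n = ln (fact n) - (real n + 1/2) * ln (real n) + real n"

lemma wallis_aux:
  fixes a b m :: real assumes "a > 0" "b > 0" "m \<ge> 0"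
  shows "a^4 / (b^2 * (2*m+1)) * (4*(m+1)^2 / (4*(m+1)^2 - 1)) = (2*(m+1)*a)^4 / ((b*(2*m+1)*(2*m+2))^2 * (2*m+3))"
proof -
  have e: "4*(m+1)^2 - 1 = (2*m+1)*(2*m+3)" by (simp add: power2_eq_square algebra_simps)
  show ?thesis unfolding e using assms
    by (simp add: divide_simps) (simp add: power2_eq_square power4_eq_xxxx algebra_simps)
qed

lemma wallis_closed:
  "(\<Prod>k=1..n. (4*real k^2) / (4*real k^2 - 1)) = (2^n * fact n)^4 / ((fact (2*n))^2 * real (2*n+1))"
proof (induction n)
  case 0 then show ?case by simp
next
  case (Suc n)
  have f2: "fact (2 * Suc n) = (fact (2*n) :: real) * (2*real n+1) * (2*real n+2)"
    by (simp add: algebra_simps)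
  have "(\<Prod>k=1..Suc n. (4*real k^2) / (4*real k^2 - 1)) =
        (2^n * fact n)^4 / ((fact (2*n))^2 * real (2*n+1)) * ((4*real (Suc n)^2) / (4*real (Suc n)^2 - 1))"
    unfolding Suc.IH[symmetric] by (simp add: prod.cl_ivl_Suc)
  also have "\<dots> = (2^Suc n * fact (Suc n))^4 / ((fact (2*Suc n))^2 * real (2*Suc n+1))"
    using wallis_aux[of "2^n * fact n" "fact (2*n)" "real n"] unfolding f2
    by (simp add: algebra_simps)
  finally show ?case .
qed

lemma ln_wallis:
  assumes "n \<ge> 1"
  shows "ln ((2^n * fact n)^4 / ((fact (2*n))^2 * real (2*n+1)) :: real) =
         4 * dd n - 2 * dd (2*n) - ln 2 - ln ((2 * real n + 1) / real n)"
proof -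
  have pos: "(0::real) < fact n" "(0::real) < fact (2*n)" by auto
  have "ln ((2^n * fact n)^4 / ((fact (2*n))^2 * real (2*n+1)) :: real) =
        4 * (real n * ln 2 + ln (fact n)) - 2 * ln (fact (2*n)) - ln (real (2*n+1))"
    using pos by (simp add: ln_div ln_mult ln_realpow)
  also have "\<dots> = 4 * dd n - 2 * dd (2*n) - ln 2 - ln ((2 * real n + 1) / real n)"
    using assms by (simp add: dd_def ln_div ln_mult algebra_simps)
  finally show ?thesis .
qed

lemma stirling_const:
  assumes lim: "dd \<longlonglongrightarrow> D"
  shows "D = ln (2 * pi) / 2"
proof -
  have l1: "(\<lambda>n. ln (\<Prod>k=1..n. (4*real k^2) / (4*real k^2 - 1))) \<longlonglongrightarrow> ln (pi / 2)"
    by (intro tendsto_ln wallis) simp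
  have l2: "(\<lambda>n. dd (2*n)) \<longlonglongrightarrow> D"
    using LIMSEQ_subseq_LIMSEQ[OF lim, of "\<lambda>n. 2*n"] by (simp add: strict_mono_def o_def)
  have l3: "(\<lambda>n. ln ((2 * real n + 1) / real n)) \<longlonglongrightarrow> ln 2"
    by real_asymp
  have l4: "(\<lambda>n. 4 * dd n - 2 * dd (2*n) - ln 2 - ln ((2 * real n + 1) / real n)) \<longlonglongrightarrow> 4 * D - 2 * D - ln 2 - ln 2"
    by (intro tendsto_intros lim l2 l3)
  have ev: "\<forall>\<^sub>F n in sequentially. 4 * dd n - 2 * dd (2*n) - ln 2 - ln ((2 * real n + 1) / real n) =
            ln (\<Prod>k=1..n. (4*real k^2) / (4*real k^2 - 1))"
  proof (rule eventually_at_top_linorderI)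
    fix n :: nat assume n: "n \<ge> 1"
    show "4 * dd n - 2 * dd (2*n) - ln 2 - ln ((2 * real n + 1) / real n) =
            ln (\<Prod>k=1..n. (4*real k^2) / (4*real k^2 - 1))"
      unfolding wallis_closed ln_wallis[OF n] ..
  qed
  have "4 * D - 2 * D - ln 2 - ln 2 = ln (pi / 2)"
    using LIMSEQ_unique[OF Lim_transform_eventually[OF l4 ev] l1] .
  then have "2 * D = ln (pi / 2) + 2 * ln 2" by simp
  also have "ln (pi / 2) + 2 * ln 2 = ln (2 * pi)"
    by (simp add: ln_div ln_mult)
  finally show ?thesis by simp
qed



lemma part1:
  "((\<lambda>x::real. frac x ^ 2 / x ^ 2) has_integral (ln (2 * pi) - euler_mascheroni - 1)) {1..}"
proof -
  define \<phi> where "\<phi> = (\<lambda>x::real. frac x ^ 2 / x ^ 2)"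
  have meas: "\<phi> \<in> borel_measurable (lebesgue_on {1..})"
    unfolding \<phi>_def using frac_meas by measurable
  have bound: "\<bar>\<phi> x\<bar> \<le> 1 / x^2" if "x \<ge> 1" for x
  proof -
    have "frac x ^ 2 \<le> 1" using frac_lt_1[of x] by (simp add: power_le_one)
    then show ?thesis using that by (simp add: \<phi>_def divide_right_mono)
  qed
  have hint: "(\<lambda>x::real. 1 / x^2) integrable_on {1..}" using inv_sq_int by blast
  note L = lim_int_nat[OF meas hint bound]
  define I where "I = integral {1..} \<phi>"
  have T: "integral {1..real N} \<phi> = T1 N" if "N \<ge> 1" for N
  proof -
    have "(\<phi> has_integral T1 N) {1..real N}"
    proof (rule int_induct[OF _ _ that])
      show "(\<phi> has_integral T1 (Suc M) - T1 M) {real M..real (Suc M)}" if "M \<ge> 1" for M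
        unfolding \<phi>_def by (rule part1_piece[OF that])
      show "T1 1 = 0" by (simp add: T1_def harm_def)
    qed
    then show ?thesis by (rule integral_unique)
  qed
  have lim1: "T1 \<longlonglongrightarrow> I"
    using L(2) unfolding I_def
    by (rule Lim_transform_eventually) (auto simp: T eventually_at_top_linorder intro!: exI[of _ 1])
  have "(\<lambda>N. (T1 N + 1 + (harm N - ln (real N))) / 2) \<longlonglongrightarrow> (I + 1 + euler_mascheroni) / 2"
    by (intro tendsto_intros lim1 euler_mascheroni_LIMSEQ) auto
  moreover have "\<forall>\<^sub>F N in sequentially. (T1 N + 1 + (harm N - ln (real N))) / 2 = dd N"
    by (auto simp: T1_def dd_def eventually_at_top_linorder field_simps intro!: exI[of _ 1])
  ultimately have "dd \<longlonglongrightarrow> (I + 1 + euler_mascheroni) / 2"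
    by (rule Lim_transform_eventually)
  from stirling_const[OF this] have "I = ln (2 * pi) - euler_mascheroni - 1" by simp
  with integrable_integral[OF L(1)] show ?thesis unfolding I_def \<phi>_def by simp
qed



definition phij :: "nat \<Rightarrow> real \<Rightarrow> real" where
  "phij j x = frac x * (real j * ln x ^ (j - 1) - ln x ^ j) / x ^ 2"

lemma lnpow_deriv:
  assumes "x > 0"
  shows "((\<lambda>x. ln x ^ j) has_real_derivative (real j * ln x ^ (j - 1) / x)) (at x)"
  using assms by (auto intro!: derivative_eq_intros simp: field_simps)

lemma phij_piece:
  fixes N :: nat assumes N: "N \<ge> 1"
  shows "(phij j has_integral (ln (real (Suc N)) ^ j / real (Suc N)
            - (ln (real (Suc N)) ^ Suc j - ln (real N) ^ Suc j) / real (Suc j))) {real N..real (Suc N)}"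
proof -
  define A where "A = (\<lambda>x::real. ln x ^ j - real N * (ln x ^ j / x) - ln x ^ Suc j / real (Suc j))"
  have "((\<lambda>x. (x - real N) * (real j * ln x ^ (j - 1) - ln x ^ j) / x ^ 2) has_integral
          (A (real (Suc N)) - A (real N))) {real N..real (Suc N)}"
  proof (rule fundamental_theorem_of_calculus)
    show "real N \<le> real (Suc N)" by simp
    fix x assume x: "x \<in> {real N..real (Suc N)}"
    then have "x > 0" using N by auto
    note d1 = lnpow_deriv[OF \<open>x > 0\<close>, of j]
    have d2: "((\<lambda>x. ln x ^ j / x) has_real_derivative
               ((real j * ln x ^ (j - 1) / x) * x - ln x ^ j * 1) / (x * x)) (at x)"
      by (rule DERIV_divide[OF d1 DERIV_ident]) (use \<open>x > 0\<close> in auto)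
    have d3: "((\<lambda>x. ln x ^ Suc j) has_real_derivative (real (Suc j) * ln x ^ j / x)) (at x)"
      using lnpow_deriv[OF \<open>x > 0\<close>, of "Suc j"] by simp
    have "(A has_real_derivative (real j * ln x ^ (j - 1) / x) - real N * (((real j * ln x ^ (j - 1) / x) * x - ln x ^ j * 1) / (x * x))
            - (real (Suc j) * ln x ^ j / x) / real (Suc j)) (at x)"
      unfolding A_def by (intro DERIV_diff DERIV_cmult DERIV_cdivide d1 d2 d3)
    moreover have "(real j * ln x ^ (j - 1) / x) - real N * (((real j * ln x ^ (j - 1) / x) * x - ln x ^ j * 1) / (x * x))
            - (real (Suc j) * ln x ^ j / x) / real (Suc j) = (x - real N) * (real j * ln x ^ (j - 1) - ln x ^ j) / x ^ 2"
      using \<open>x > 0\<close> by (simp add: field_simps power2_eq_square del: of_nat_Suc)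
    ultimately have "(A has_real_derivative (x - real N) * (real j * ln x ^ (j - 1) - ln x ^ j) / x ^ 2) (at x)"
      by simp
    then show "(A has_vector_derivative (x - real N) * (real j * ln x ^ (j - 1) - ln x ^ j) / x ^ 2) (at x within {real N..real (Suc N)})"
      by (simp add: has_real_derivative_iff_has_vector_derivative[symmetric] has_field_derivative_at_within)
  qed
  also have "A (real (Suc N)) - A (real N) = ln (real (Suc N)) ^ j / real (Suc N)
            - (ln (real (Suc N)) ^ Suc j - ln (real N) ^ Suc j) / real (Suc j)"
  proof -
    have a1: "A (real (Suc N)) = ln (real (Suc N)) ^ j / real (Suc N) - ln (real (Suc N)) ^ Suc j / real (Suc j)"
    proof -
      have "ln (real (Suc N)) ^ j - real N * (ln (real (Suc N)) ^ j / real (Suc N)) = ln (real (Suc N)) ^ j / real (Suc N)"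
        by (simp add: field_simps)
      then show ?thesis unfolding A_def by simp
    qed
    have a2: "A (real N) = - (ln (real N) ^ Suc j / real (Suc j))"
      using N unfolding A_def by simp
    show ?thesis unfolding a1 a2 by (simp add: diff_divide_distrib)
  qed
  finally have I: "((\<lambda>x. (x - real N) * (real j * ln x ^ (j - 1) - ln x ^ j) / x ^ 2) has_integral
     (ln (real (Suc N)) ^ j / real (Suc N) - (ln (real (Suc N)) ^ Suc j - ln (real N) ^ Suc j) / real (Suc j)))
     {real N..real (Suc N)}" .
  show ?thesis
    by (rule has_integral_spike_finite[OF _ _ I, of "{real (Suc N)}"]) (auto simp: frac_on_piece phij_def)
qed

definition SS :: "nat \<Rightarrow> nat \<Rightarrow> real" where
  "SS j N = (\<Sum>k=1..N. ln (real k) ^ j / real k) - ln (real N) ^ (Suc j) / real (Suc j)"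

lemma phij_int_N:
  assumes "N \<ge> 1"
  shows "integral {1..real N} (phij j) = SS j N - (if j = 0 then 1 else 0)"
proof -
  have "(phij j has_integral (SS j N - (if j = 0 then 1 else 0))) {1..real N}"
  proof (rule int_induct[OF _ _ assms])
    fix M :: nat assume M: "M \<ge> 1"
    have "SS j (Suc M) - (if j = 0 then 1 else 0) - (SS j M - (if j = 0 then 1 else 0)) =
          ln (real (Suc M)) ^ j / real (Suc M) - (ln (real (Suc M)) ^ Suc j - ln (real M) ^ Suc j) / real (Suc j)"
      by (simp add: SS_def diff_divide_distrib)
    then show "(phij j has_integral SS j (Suc M) - (if j = 0 then 1 else 0) - (SS j M - (if j = 0 then 1 else 0)))
        {real M..real (Suc M)}"
      using phij_piece[OF M, of j] by simp
  next
    show "SS j 1 - (if j = 0 then 1 else 0) = 0" by (simp add: SS_def)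
  qed
  then show ?thesis by (rule integral_unique)
qed

definition Ik :: "nat \<Rightarrow> real" where
  "Ik k = integral {1..} (\<lambda>x::real. frac x * ln x ^ k / x ^ 2)"

lemma frac_ln_int: "(\<lambda>x::real. frac x * ln x ^ k / x ^ 2) integrable_on {1..}"
proof (rule measurable_bounded_by_integrable_imp_integrable)
  show "(\<lambda>x::real. frac x * ln x ^ k / x ^ 2) \<in> borel_measurable (lebesgue_on {1..})"
    using frac_meas by measurable
  show "(\<lambda>x::real. ln x ^ k / x ^ 2) integrable_on {1..}" using moment0 by blast
  fix x :: real assume x: "x \<in> {1..}"
  have "frac x * ln x ^ k \<le> 1 * ln x ^ k"
    using x frac_lt_1[of x] by (intro mult_right_mono) auto
  then show "norm (frac x * ln x ^ k / x ^ 2) \<le> ln x ^ k / x ^ 2"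
    using x by (auto simp: abs_mult divide_right_mono)
qed auto

lemma stieltjes_eq: "stieltjes j = (if j = 0 then 1 else 0) + real j * Ik (j - 1) - Ik j"
proof -
  have meas: "phij j \<in> borel_measurable (lebesgue_on {1..})"
    unfolding phij_def using frac_meas by measurable
  have hint: "(\<lambda>x::real. real j * (ln x ^ (j-1) / x^2) + ln x ^ j / x^2) integrable_on {1..}"
    by (intro integrable_add integrable_on_mult_right has_integral_integrable[OF moment0])
  have bound: "\<bar>phij j x\<bar> \<le> real j * (ln x ^ (j-1) / x^2) + ln x ^ j / x^2" if x: "x \<ge> 1" for x
  proof -
    have "\<bar>phij j x\<bar> = frac x * \<bar>real j * ln x ^ (j - 1) - ln x ^ j\<bar> / x ^ 2"
      using x by (simp add: phij_def abs_mult abs_divide)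
    also have "\<dots> \<le> 1 * (real j * ln x ^ (j - 1) + ln x ^ j) / x ^ 2"
    proof -
      have "0 \<le> real j * ln x ^ (j-1)" "0 \<le> ln x ^ j" using x by auto
      then have "\<bar>real j * ln x ^ (j - 1) - ln x ^ j\<bar> \<le> real j * ln x ^ (j - 1) + ln x ^ j" by auto
      then show ?thesis using x frac_lt_1[of x]
        by (intro divide_right_mono mult_mono) auto
    qed
    finally show ?thesis by (simp add: add_divide_distrib)
  qed
  note L = lim_int_nat[OF meas hint bound]
  have "(\<lambda>N. SS j N) \<longlonglongrightarrow> (if j = 0 then 1 else 0) + integral {1..} (phij j)"
  proof -
    have "(\<lambda>N. (if j = 0 then 1 else 0) + integral {1..real N} (phij j)) \<longlonglongrightarrow> (if j = 0 then 1 else 0) + integral {1..} (phij j)"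
      by (intro tendsto_intros L(2))
    then show ?thesis
      by (rule Lim_transform_eventually) (auto simp: phij_int_N eventually_at_top_linorder intro!: exI[of _ 1])
  qed
  then have "stieltjes j = (if j = 0 then 1 else 0) + integral {1..} (phij j)"
    unfolding stieltjes_def SS_def by (rule limI)
  also have "integral {1..} (phij j) = real j * Ik (j - 1) - Ik j"
  proof -
    define g where "g k = (\<lambda>x::real. frac x * ln x ^ k / x ^ 2)" for k
    have gi: "g k integrable_on {1..}" for k unfolding g_def by (rule frac_ln_int)
    have "phij j = (\<lambda>x. real j * g (j-1) x - g j x)"
      by (rule ext) (simp add: phij_def g_def right_diff_distrib diff_divide_distrib mult_ac)
    then have "integral {1..} (phij j) = real j * integral {1..} (g (j-1)) - integral {1..} (g j)"
      using gi by (simp add: integral_diff integrable_on_mult_right)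
    then show ?thesis by (simp add: Ik_def g_def)
  qed
  finally show ?thesis by simp
qed

lemma Ik_closed: "Ik k = fact k * (1 - (\<Sum>j\<le>k. stieltjes j / fact j))"
proof (induction k)
  case 0 then show ?case using stieltjes_eq[of 0] by simp
next
  case (Suc k)
  have "Ik (Suc k) = real (Suc k) * Ik k - stieltjes (Suc k)"
    using stieltjes_eq[of "Suc k"] by simp
  also have "\<dots> = fact (Suc k) * (1 - (\<Sum>j\<le>Suc k. stieltjes j / fact j))"
  proof -
    have f: "fact (Suc k) = real (Suc k) * (fact k :: real)" by simp
    have "fact (Suc k) * (stieltjes (Suc k) / fact (Suc k)) = stieltjes (Suc k)" by simp
    then show ?thesis unfolding Suc.IH by (simp add: f algebra_simps del: fact_Suc)
  qed
  finally show ?case .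
qed

lemma stieltjes0: "stieltjes 0 = euler_mascheroni"
proof -
  have "(\<lambda>N::nat. (\<Sum>k=1..N. ln (real k) ^ 0 / real k) - ln (real N) ^ Suc 0 / real (Suc 0)) = (\<lambda>N. harm N - ln (real N))"
    by (auto simp: harm_def divide_inverse)
  then show ?thesis unfolding stieltjes_def using euler_mascheroni_LIMSEQ by (simp add: limI)
qed



lemma coef_Fq: "coef Fq n = (\<Sum>k\<le>n. lag n k * Ik k)"
proof -
  define g where "g k = (\<lambda>x::real. frac x * ln x ^ k / x ^ 2)" for k
  have eq: "(\<lambda>x. Fq x * psi n x) = (\<lambda>x. \<Sum>k\<le>n. lag n k * g k x)"
    by (rule ext) (simp add: g_def Fq_def psi_def sum_distrib_left sum_divide_distrib power2_eq_square mult_ac)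
  have gi: "(g k has_integral Ik k) {1..}" for k
    unfolding g_def Ik_def by (rule integrable_integral[OF frac_ln_int])
  have "((\<lambda>x. \<Sum>k\<le>n. lag n k * g k x) has_integral (\<Sum>k\<le>n. lag n k * Ik k)) {1..}"
    by (intro has_integral_sum has_integral_mult_right gi) auto
  then show ?thesis unfolding coef_def eq by (rule integral_unique)
qed

lemma alt_partial:
  assumes "n \<ge> 1"
  shows "(\<Sum>k\<le>m. (-1)^k * real (n choose k)) = (-1)^m * real ((n - 1) choose m)"
proof (induction m)
  case 0 then show ?case by simp
next
  case (Suc m)
  obtain n' where n': "n = Suc n'" using assms by (cases n) auto
  have "(\<Sum>k\<le>Suc m. (-1)^k * real (n choose k)) = (-1)^m * real (n' choose m) + (-1)^Suc m * real (n choose Suc m)"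
    using Suc.IH n' by simp
  also have "\<dots> = (-1)^Suc m * real (n' choose Suc m)"
    using n' by (simp add: algebra_simps)
  finally show ?case using n' by simp
qed

lemma alt_tail:
  assumes "n \<ge> 1"
  shows "(\<Sum>k\<le>n. if j \<le> k then real (n choose k) * (-1)^k else 0) =
         (if j = 0 then 0 else (-1)^j * real ((n - 1) choose (j - 1)))"
proof -
  have tot: "(\<Sum>k\<le>n. (-1)^k * real (n choose k)) = 0"
    using choose_alternating_sum[of n, where 'a=real] assms by simp
  show ?thesis
  proof (cases "j = 0")
    case True
    then show ?thesis using tot by (simp add: mult.commute)
  next
    case False
    then obtain i where j: "j = Suc i" by (cases j) auto
    have "(\<Sum>k\<le>n. (-1)^k * real (n choose k)) =
          (\<Sum>k\<le>n. if j \<le> k then real (n choose k) * (-1)^k else 0) +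
          (\<Sum>k\<le>n. if k \<le> i then (-1)^k * real (n choose k) else 0)"
      by (subst sum.distrib[symmetric], rule sum.cong) (auto simp: j)
    also have "(\<Sum>k\<le>n. if k \<le> i then (-1)^k * real (n choose k) else 0) = (\<Sum>k\<le>i. (-1)^k * real (n choose k))"
    proof (cases "i \<le> n")
      case True
      then have "{..n} \<inter> {..i} = {..i}" by auto
      then show ?thesis using sum.inter_restrict[of "{..n}" "\<lambda>k. (-1)^k * real (n choose k)" "{..i}"] by simp
    next
      case False
      have "(\<Sum>k\<le>i. (-1)^k * real (n choose k)) = (\<Sum>k\<le>n. (-1)^k * real (n choose k))"
        using False by (intro sum.mono_neutral_right) (auto simp: binomial_eq_0)
      then show ?thesis using False by simp
    qed
    also have "\<dots> = (-1)^i * real ((n-1) choose i)" by (rule alt_partial[OF assms])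
    finally show ?thesis using tot j by simp
  qed
qed

lemma neg1_diff: "k \<le> n \<Longrightarrow> (-1::real)^(n - k) = (-1)^n * (-1)^k"
proof -
  assume "k \<le> n"
  then obtain d where d: "n = k + d" using le_Suc_ex by blast
  have "(-1::real)^k * (-1)^k = 1" by (simp flip: power_mult_distrib)
  then show ?thesis unfolding d by (simp add: power_add mult_ac)
qed

lemma coef_ell: "coef Fq n ^ 2 = ell n ^ 2"
proof -
  define g where "g j = stieltjes j / fact j" for j
  have c: "coef Fq n = (\<Sum>k\<le>n. real (n choose k) * (-1)^k * (1 - (\<Sum>j\<le>k. g j)))"
    unfolding coef_Fq Ik_closed g_def by (rule sum.cong) (auto simp: lag_def)
  show ?thesis
  proof (cases "n = 0")
    case True
    have c0: "coef Fq 0 = 1 - euler_mascheroni" using c True by (simp add: g_def stieltjes0)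
    show ?thesis unfolding True c0 ell_def by (simp add: power2_eq_square algebra_simps)
  next
    case False
    then have n: "n \<ge> 1" by simp
    have "coef Fq n = (\<Sum>k\<le>n. real (n choose k) * (-1)^k) - (\<Sum>k\<le>n. \<Sum>j\<le>n. (if j \<le> k then real (n choose k) * (-1)^k else 0) * g j)"
    proof -
      have inner: "real (n choose k) * (-1)^k * (\<Sum>j\<le>k. g j) =
          (\<Sum>j\<le>n. (if j \<le> k then real (n choose k) * (-1)^k else 0) * g j)" if "k \<le> n" for k
      proof -
        have "(\<Sum>j\<le>n. (if j \<le> k then real (n choose k) * (-1)^k else 0) * g j) =
              (\<Sum>j\<le>n. if j \<in> {..k} then real (n choose k) * (-1)^k * g j else 0)"
          by (rule sum.cong) auto
        also have "\<dots> = (\<Sum>j\<in>{..n} \<inter> {..k}. real (n choose k) * (-1)^k * g j)"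
          by (rule sum.inter_restrict[symmetric]) simp
        also have "{..n} \<inter> {..k} = {..k}" using that by auto
        finally show ?thesis by (simp add: sum_distrib_left)
      qed
      have "coef Fq n = (\<Sum>k\<le>n. real (n choose k) * (-1)^k - real (n choose k) * (-1)^k * (\<Sum>j\<le>k. g j))"
        unfolding c by (simp add: right_diff_distrib)
      also have "\<dots> = (\<Sum>k\<le>n. real (n choose k) * (-1)^k) - (\<Sum>k\<le>n. real (n choose k) * (-1)^k * (\<Sum>j\<le>k. g j))"
        by (rule sum_subtractf)
      also have "(\<Sum>k\<le>n. real (n choose k) * (-1)^k * (\<Sum>j\<le>k. g j)) =
           (\<Sum>k\<le>n. \<Sum>j\<le>n. (if j \<le> k then real (n choose k) * (-1)^k else 0) * g j)"
        by (rule sum.cong) (auto simp: inner)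
      finally show ?thesis .
    qed
    also have "(\<Sum>k\<le>n. real (n choose k) * (-1)^k) = 0"
      using choose_alternating_sum[of n, where 'a=real] n by (simp add: mult.commute)
    also have "(\<Sum>k\<le>n. \<Sum>j\<le>n. (if j \<le> k then real (n choose k) * (-1)^k else 0) * g j)
             = (\<Sum>j\<le>n. (\<Sum>k\<le>n. if j \<le> k then real (n choose k) * (-1)^k else 0) * g j)"
      by (subst sum.swap) (simp add: sum_distrib_right)
    also have "\<dots> = (\<Sum>j\<le>n. (if j = 0 then 0 else (-1)^j * real ((n - 1) choose (j - 1))) * g j)"
      by (simp add: alt_tail[OF n])
    also have "\<dots> = (\<Sum>j=1..n. (-1)^j * real ((n - 1) choose (j - 1)) * g j)"
      by (rule sum.mono_neutral_cong_right) auto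
    finally have c2: "coef Fq n = - (\<Sum>j=1..n. (-1)^j * real ((n - 1) choose (j - 1)) * g j)" by simp
    have "ell n = (\<Sum>k=1..n. real ((n - 1) choose (k - 1)) * (-1) ^ (n - k) / fact k * stieltjes k)"
      using False by (simp add: ell_def)
    also have "\<dots> = (-1)^n * (\<Sum>j=1..n. (-1)^j * real ((n - 1) choose (j - 1)) * g j)"
      unfolding sum_distrib_left by (rule sum.cong) (auto simp: neg1_diff g_def)
    finally have "ell n = - ((-1)^n * coef Fq n)" using c2 by simp
    then show ?thesis by (simp add: power2_eq_square power_mult_distrib[symmetric] flip: power_mult_distrib)
  qed
qed

theorem mainTheorem12:
  shows "((\<lambda>x::real. frac x ^ 2 / x ^ 2) has_integral (ln (2 * pi) - euler_mascheroni - 1)) {1..}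
         \<and> (\<lambda>n. ell n ^ 2) sums (ln (2 * pi) - euler_mascheroni - 1)"
proof
  show P1: "((\<lambda>x::real. frac x ^ 2 / x ^ 2) has_integral (ln (2 * pi) - euler_mascheroni - 1)) {1..}"
    by (rule part1)
  have "(\<lambda>n. coef Fq n ^ 2) sums integral {1..} (\<lambda>x. Fq x ^ 2)"
    by (rule parseval_abstract[OF good_Fq approx_Fq])
  moreover have "(\<lambda>x. Fq x ^ 2) = (\<lambda>x::real. frac x ^ 2 / x ^ 2)"
    by (rule ext) (simp add: Fq_def power_divide)
  ultimately show "(\<lambda>n. ell n ^ 2) sums (ln (2 * pi) - euler_mascheroni - 1)"
    using integral_unique[OF P1] by (simp add: coef_ell)
qed


end
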